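(* Let $\alpha\in\mathbb{N}$, let $n\in\mathbb{N}$ with $3\nmid n$ and $n>6\alpha+3$, and let $\mathbb{S}=\langle 6,6\alpha+3,n\rangle$. Put $\beta_2=12\alpha+6$ and $\beta_3=3n$. Then (i) $F(\mathbb{S})=\frac{\beta_2+\beta_3}{2}-\frac{12-n}{2}$; (ii) $g(\mathbb{S})=\frac{\beta_2+\beta_3}{4}+\frac{n-10}{4}$.
   Context: $\mathbb{N}=\{0,1,2,\dots\}$. $\langle a_1,\dots,a_e\rangle$ is the set of $\mathbb{N}$-linear combinations of $a_1,\dots,a_e$. For a numerical semigroup $\mathbb{S}$, the Frobenius number $F(\mathbb{S})$ is the largest integer not in $\mathbb{S}$, and the genus $g(\mathbb{S})$ is the number of positive integers not in $\mathbb{S}$. *)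

theory Defs
  imports Complex_Main
begin

definition semigroup_gen :: "nat list \<Rightarrow> nat set" where
  "semigroup_gen as = {x. \<exists>cs. length cs = length as \<and> x = (\<Sum>i<length as. cs ! i * as ! i)}"

definition frobenius :: "nat set \<Rightarrow> int" where
  "frobenius S = (GREATEST z :: int. z \<notin> int ` S)"

definition genus :: "nat set \<Rightarrow> nat" where
  "genus S = card {x :: nat. 0 < x \<and> x \<notin> S}"

end

theory Submission
  imports Defs
begin

lemma mem_gen3: "x \<in> semigroup_gen [a, b, c] \<longleftrightarrow> (\<exists>i j l. x = a*i + b*j + c*l)"
proof
  assume "x \<in> semigroup_gen [a, b, c]"
  then obtain cs where "length cs = length [a,b,c]" "x = (\<Sum>i<length [a,b,c]. cs ! i * [a,b,c] ! i)"
    unfolding semigroup_gen_def by blast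
  then have "x = a * cs!0 + b * cs!1 + c * cs!2"
    by (simp add: numeral_3_eq_3 numeral_2_eq_2 lessThan_Suc algebra_simps)
  then show "\<exists>i j l. x = a*i + b*j + c*l" by blast
next
  assume "\<exists>i j l. x = a*i + b*j + c*l"
  then obtain i j l where "x = a*i + b*j + c*l" by blast
  then show "x \<in> semigroup_gen [a, b, c]"
    unfolding semigroup_gen_def
    by (intro CollectI exI[of _ "[i,j,l]"]) (simp add: numeral_3_eq_3 lessThan_Suc algebra_simps)
qed

lemma res_inj:
  fixes n k l :: nat
  assumes "\<not> 3 dvd n" "k < 3" "(n*l) mod 3 = (n*k) mod 3"
  shows "l mod 3 = k"
proof -
  have n: "n mod 3 = 1 \<or> n mod 3 = 2" using assms(1) by presburger
  have l: "l mod 3 = 0 \<or> l mod 3 = 1 \<or> l mod 3 = 2" by presburger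
  have k: "k = 0 \<or> k = 1 \<or> k = 2" using assms(2) by presburger
  have e: "((n mod 3)*(l mod 3)) mod 3 = ((n mod 3)*(k mod 3)) mod 3"
    using assms(3) by (metis mod_mult_eq)
  show ?thesis using n l k e by auto
qed

lemma res_surj:
  fixes n r :: nat
  assumes "\<not> 3 dvd n" "r < 3"
  shows "\<exists>k<3. (n*k) mod 3 = r"
proof -
  have n: "n mod 3 = 1 \<or> n mod 3 = 2" using assms(1) by presburger
  have r: "r = 0 \<or> r = 1 \<or> r = 2" using assms(2) by presburger
  have m: "\<And>k. (n*k) mod 3 = ((n mod 3)*(k mod 3)) mod 3" by (metis mod_mult_eq)
  show ?thesis
  proof (cases "r = 0")
    case True then show ?thesis by (intro exI[of _ 0]) auto
  next
    case False
    then have r: "r = 1 \<or> r = 2" using r by auto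
    show ?thesis using n r
    proof (elim disjE)
      assume "n mod 3 = 1" "r = 1" then show ?thesis by (intro exI[of _ 1]) auto
    next
      assume "n mod 3 = 1" "r = 2" then show ?thesis by (intro exI[of _ 2]) (auto simp: m)
    next
      assume "n mod 3 = 2" "r = 1" then show ?thesis by (intro exI[of _ 2]) (auto simp: m)
    next
      assume "n mod 3 = 2" "r = 2" then show ?thesis by (intro exI[of _ 1]) auto
    qed
  qed
qed

lemma key:
  fixes \<alpha> n k t :: nat
  assumes "\<not> 3 dvd n" "n > 6 * \<alpha> + 3" "k < 3"
  shows "3*t + (n*k) mod 3 \<in> semigroup_gen [6, 6 * \<alpha> + 3, n] \<longleftrightarrow>
     ((n*k) div 3 \<le> t \<and> (even (t - (n*k) div 3) \<or> t - (n*k) div 3 \<ge> 2*\<alpha>+1))"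
    (is "?L \<longleftrightarrow> ?R")
proof -
  define c where "c = (n*k) div 3"
  define r where "r = (n*k) mod 3"
  have nk: "n*k = 3*c + r" unfolding c_def r_def by simp
  show ?thesis
  proof
    assume ?L
    then obtain i j l where e: "3*t + r = 6*i + (6*\<alpha>+3)*j + n*l"
      unfolding mem_gen3 r_def by blast
    have "(n*l) mod 3 = (n*k) mod 3"
    proof -
      have "(3*t + r) mod 3 = r" unfolding r_def by simp
      moreover have "(6*i + (6*\<alpha>+3)*j + n*l) mod 3 = (n*l) mod 3"
      proof -
        have "6*i + (6*\<alpha>+3)*j + n*l = n*l + 3*(2*i + (2*\<alpha>+1)*j)" by (simp add: algebra_simps)
        then show ?thesis by (simp only: mod_mult_self2)
      qed
      ultimately show ?thesis using e unfolding r_def by simp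
    qed
    then have "l mod 3 = k" using res_inj assms by blast
    define m where "m = l div 3"
    have l: "l = k + 3*m" unfolding m_def using \<open>l mod 3 = k\<close> by presburger
    have "3*t + r = 3*c + r + 3*(2*i + (2*\<alpha>+1)*j + n*m)"
      using e nk unfolding l by (simp add: algebra_simps)
    then have t: "t = c + (2*i + (2*\<alpha>+1)*j + n*m)" by simp
    have "c \<le> t \<and> (even (t - c) \<or> t - c \<ge> 2*\<alpha>+1)"
    proof (cases "j = 0 \<and> m = 0")
      case True then show ?thesis using t by simp
    next
      case False
      then have "(2*\<alpha>+1)*j \<ge> 2*\<alpha>+1 \<or> n*m \<ge> 2*\<alpha>+1"
      proof (cases "j = 0")
        case True
        then have "m \<ge> 1" using False by simp
        then have "n*m \<ge> n" by simp
        then show ?thesis using assms(2) by linarith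
      next
        case False
        then have "(2*\<alpha>+1)*j \<ge> (2*\<alpha>+1)*1" by (intro mult_le_mono2) simp
        then show ?thesis by simp
      qed
      then show ?thesis using t by linarith
    qed
    then show ?R by (simp only: c_def)
  next
    assume ?R
    then have R: "c \<le> t" "even (t - c) \<or> t - c \<ge> 2*\<alpha>+1" by (simp_all only: c_def)
    show ?L unfolding r_def[symmetric] mem_gen3
    proof (cases "even (t - c)")
      case True
      then obtain i where "t - c = 2*i" by (rule evenE)
      then have h: "3*t + r = 6*i + (6*\<alpha>+3)*0 + n*k" using R(1) nk by simp
      show "\<exists>i j l. 3*t + r = 6*i + (6*\<alpha>+3)*j + n*l" by (rule exI[of _ i], rule exI[of _ 0], rule exI[of _ k], rule h)
    next
      case False
      then have ge: "t - c \<ge> 2*\<alpha>+1" using R(2) by blast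
      obtain q where q: "t - c = 2*q+1" using False by (rule oddE)
      define i where "i = q - \<alpha>"
      have "t - c = 2*\<alpha>+1 + 2*i" unfolding i_def using ge q by linarith
      then have h: "3*t + r = 6*i + (6*\<alpha>+3)*1 + n*k" using R(1) nk by simp
      show "\<exists>i j l. 3*t + r = 6*i + (6*\<alpha>+3)*j + n*l" by (rule exI[of _ i], rule exI[of _ 1], rule exI[of _ k], rule h)
    qed
  qed
qed

definition Bk :: "nat \<Rightarrow> nat \<Rightarrow> nat \<Rightarrow> nat set" where
  "Bk \<alpha> n k = (\<lambda>t. 3*t + (n*k) mod 3) ` ({..<(n*k) div 3} \<union> (\<lambda>j. (n*k) div 3 + 2*j+1) ` {..<\<alpha>})"

lemma B_iff:
  fixes \<alpha> n k x :: nat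
  assumes "\<not> 3 dvd n" "n > 6 * \<alpha> + 3" "k < 3"
  shows "x \<in> Bk \<alpha> n k \<longleftrightarrow> (x mod 3 = (n*k) mod 3 \<and> x \<notin> semigroup_gen [6, 6 * \<alpha> + 3, n])"
proof -
  define c where "c = (n*k) div 3"
  define r where "r = (n*k) mod 3"
  have r3: "r < 3" unfolding r_def by simp
  have K: "\<And>t. 3*t + r \<in> semigroup_gen [6, 6 * \<alpha> + 3, n] \<longleftrightarrow>
     (c \<le> t \<and> (even (t - c) \<or> t - c \<ge> 2*\<alpha>+1))"
    unfolding c_def r_def by (rule key[OF assms])
  show ?thesis unfolding Bk_def c_def[symmetric] r_def[symmetric]
  proof
    assume "x \<in> (\<lambda>t. 3*t + r) ` ({..<c} \<union> (\<lambda>j. c + 2*j+1) ` {..<\<alpha>})"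
    then obtain t where x: "x = 3*t + r" and tm: "t \<in> {..<c} \<union> (\<lambda>j. c + 2*j+1) ` {..<\<alpha>}"
      by (rule imageE)
    have "x mod 3 = r" using x r3 by simp
    moreover have "\<not> (c \<le> t \<and> (even (t - c) \<or> t - c \<ge> 2*\<alpha>+1))"
    proof
      assume a: "c \<le> t \<and> (even (t - c) \<or> t - c \<ge> 2*\<alpha>+1)"
      then have "t \<notin> {..<c}" by simp
      then have "t \<in> (\<lambda>j. c + 2*j+1) ` {..<\<alpha>}" using tm by blast
      then obtain j where j: "j < \<alpha>" "t = c + 2*j+1" by blast
      then have tc: "t - c = 2*j+1" by simp
      have "odd (t - c)" unfolding tc by simp
      moreover have "\<not> (t - c \<ge> 2*\<alpha>+1)" unfolding tc using j(1) by simp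
      ultimately show False using a by blast
    qed
    ultimately show "x mod 3 = r \<and> x \<notin> semigroup_gen [6, 6 * \<alpha> + 3, n]" using K[of t] unfolding x by blast
  next
    assume a: "x mod 3 = r \<and> x \<notin> semigroup_gen [6, 6 * \<alpha> + 3, n]"
    define t where "t = x div 3"
    have x: "x = 3*t + r" unfolding t_def using conjunct1[OF a] mult_div_mod_eq[of 3 x] by linarith
    have "3*t + r \<notin> semigroup_gen [6, 6 * \<alpha> + 3, n]" using a x by simp
    then have nt: "\<not> (c \<le> t \<and> (even (t - c) \<or> t - c \<ge> 2*\<alpha>+1))" using K[of t] by blast
    have "t \<in> {..<c} \<union> (\<lambda>j. c + 2*j+1) ` {..<\<alpha>}"
    proof (cases "t < c")
      case True then show ?thesis by simp
    next
      case False
      then have ct: "c \<le> t" by simp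
      then have o: "odd (t - c)" and lt: "t - c < 2*\<alpha>+1" using nt by (simp_all add: not_le)
      obtain q where q: "t - c = 2*q+1" using o by (rule oddE)
      have "q < \<alpha>" using q lt by simp
      moreover have "t = c + 2*q+1" using q False by simp
      ultimately show ?thesis by blast
    qed
    then show "x \<in> (\<lambda>t. 3*t + r) ` ({..<c} \<union> (\<lambda>j. c + 2*j+1) ` {..<\<alpha>})"
      using x by blast
  qed
qed

lemma card_B: "card (Bk \<alpha> n k) = (n*k) div 3 + \<alpha>"
proof -
  define c where "c = (n*k) div 3"
  define r where "r = (n*k) mod 3"
  have i1: "inj_on (\<lambda>t::nat. 3*t + r) X" for X by (rule inj_onI) simp
  have i2: "inj_on (\<lambda>j::nat. c + 2*j+1) X" for X by (rule inj_onI) simp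
  have d: "{..<c} \<inter> (\<lambda>j. c + 2*j+1) ` {..<\<alpha>} = {}" by auto
  have "card (Bk \<alpha> n k) = card ({..<c} \<union> (\<lambda>j. c + 2*j+1) ` {..<\<alpha>})"
    unfolding Bk_def c_def[symmetric] r_def[symmetric] by (rule card_image[OF i1])
  also have "\<dots> = c + card ((\<lambda>j. c + 2*j+1) ` {..<\<alpha>})"
    by (subst card_Un_disjoint[OF _ _ d]) auto
  also have "\<dots> = c + \<alpha>" by (subst card_image[OF i2]) simp
  finally show ?thesis unfolding c_def .
qed

lemma B_le:
  fixes \<alpha> n k x :: nat
  assumes "k < 3" "x \<in> Bk \<alpha> n k"
  shows "x + 3 \<le> 2*n + 6*\<alpha>"
proof -
  define c where "c = (n*k) div 3"
  define r where "r = (n*k) mod 3"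
  have nk: "n*k = 3*c + r" unfolding c_def r_def by simp
  have "n*k \<le> n*2" using assms(1) by (intro mult_le_mono2) simp
  moreover obtain t where x: "x = 3*t + r" and t: "t < c \<or> (\<exists>j<\<alpha>. t = c + 2*j+1)"
    using assms(2) unfolding Bk_def c_def[symmetric] r_def[symmetric] by auto
  ultimately show ?thesis using nk by auto
qed

theorem corollary3:
  fixes \<alpha> n :: nat
  assumes "\<not> (3 dvd n)"
    and "n > 6 * \<alpha> + 3"
  defines "S \<equiv> semigroup_gen [6, 6 * \<alpha> + 3, n]"
    and "\<beta>2 \<equiv> 12 * \<alpha> + 6"
    and "\<beta>3 \<equiv> 3 * n"
  shows "real_of_int (frobenius S) = (real \<beta>2 + real \<beta>3) / 2 - (12 - real n) / 2
    \<and> real (genus S) = (real \<beta>2 + real \<beta>3) / 4 + (real n - 10) / 4"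
proof -
  have zero: "0 \<in> S" unfolding S_def mem_gen3 by auto
  have gaps: "{x. 0 < x \<and> x \<notin> S} = Bk \<alpha> n 0 \<union> Bk \<alpha> n 1 \<union> Bk \<alpha> n 2"
  proof (intro set_eqI iffI)
    fix x assume "x \<in> {x. 0 < x \<and> x \<notin> S}"
    then have xs: "x \<notin> S" by simp
    obtain k where k: "k < 3" "(n*k) mod 3 = x mod 3" using res_surj[OF assms(1), of "x mod 3"] by auto
    then have "x \<in> Bk \<alpha> n k" using B_iff[OF assms(1,2) k(1)] xs unfolding S_def by simp
    moreover have "k = 0 \<or> k = 1 \<or> k = 2" using k by auto
    ultimately show "x \<in> Bk \<alpha> n 0 \<union> Bk \<alpha> n 1 \<union> Bk \<alpha> n 2" by auto
  next
    fix x assume "x \<in> Bk \<alpha> n 0 \<union> Bk \<alpha> n 1 \<union> Bk \<alpha> n 2"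
    then have "\<exists>k<3. x \<in> Bk \<alpha> n k" by force
    then obtain k where "k < 3" "x \<in> Bk \<alpha> n k" by blast
    then have "x \<notin> S" using B_iff[OF assms(1,2)] unfolding S_def by blast
    then show "x \<in> {x. 0 < x \<and> x \<notin> S}" using zero by (cases x) auto
  qed
  have disj: "Bk \<alpha> n k \<inter> Bk \<alpha> n k' = {}" if "k < 3" "k' < 3" "k \<noteq> k'" for k k'
  proof (rule ccontr)
    assume "Bk \<alpha> n k \<inter> Bk \<alpha> n k' \<noteq> {}"
    then obtain x where x1: "x \<in> Bk \<alpha> n k" and x2: "x \<in> Bk \<alpha> n k'" by blast
    have "x mod 3 = (n*k) mod 3" using B_iff[OF assms(1,2) that(1)] x1 by blast
    moreover have "x mod 3 = (n*k') mod 3" using B_iff[OF assms(1,2) that(2)] x2 by blast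
    ultimately have "(n*k') mod 3 = (n*k) mod 3" by simp
    then have "k' mod 3 = k" using res_inj[OF assms(1) that(1)] by blast
    then show False using that by simp
  qed
  have fin: "finite (Bk \<alpha> n k)" for k unfolding Bk_def by simp
  have "genus S = card (Bk \<alpha> n 0 \<union> Bk \<alpha> n 1 \<union> Bk \<alpha> n 2)"
    unfolding genus_def gaps ..
  also have "\<dots> = card (Bk \<alpha> n 0) + card (Bk \<alpha> n 1) + card (Bk \<alpha> n 2)"
  proof -
    have d1: "Bk \<alpha> n 0 \<inter> Bk \<alpha> n 1 = {}" by (rule disj) auto
    have d2: "(Bk \<alpha> n 0 \<union> Bk \<alpha> n 1) \<inter> Bk \<alpha> n 2 = {}"
      using disj[of 0 2] disj[of 1 2] by auto
    have "card ((Bk \<alpha> n 0 \<union> Bk \<alpha> n 1) \<union> Bk \<alpha> n 2) = card (Bk \<alpha> n 0 \<union> Bk \<alpha> n 1) + card (Bk \<alpha> n 2)"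
      by (rule card_Un_disjoint[OF _ _ d2]) (use fin in auto)
    moreover have "card (Bk \<alpha> n 0 \<union> Bk \<alpha> n 1) = card (Bk \<alpha> n 0) + card (Bk \<alpha> n 1)"
      by (rule card_Un_disjoint[OF _ _ d1]) (use fin in auto)
    ultimately show ?thesis by simp
  qed
  also have "\<dots> = 3*\<alpha> + n - 1"
  proof -
    define q where "q = n div 3"
    have nq: "n = 3*q + n mod 3" unfolding q_def by simp
    have s: "n mod 3 = 1 \<or> n mod 3 = 2" using assms(1) by presburger
    have "n div 3 + (n*2) div 3 = n - 1"
    proof (cases "n mod 3 = 1")
      case True
      have "n*2 = 3*(2*q) + 2" using nq True by presburger
      moreover have "n = 3*q + 1" using nq True by presburger
      ultimately
      show ?thesis by presburger
    next
      case False
      have "n mod 3 = 2" using False s by simp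
      then have "n*2 = 3*(2*q+1) + 1" using nq by presburger
      moreover have "n = 3*q + 2" using nq \<open>n mod 3 = 2\<close> by presburger
      ultimately
      show ?thesis by presburger
    qed
    then show ?thesis unfolding card_B using assms(2) by simp
  qed
  finally have g: "genus S = 3*\<alpha> + n - 1" .
  define F0 where "F0 = 2*n + 6*\<alpha> - 3"
  have above: "x \<in> S" if "x > F0" for x
  proof (rule ccontr)
    assume "x \<notin> S"
    then have "x \<in> {x. 0 < x \<and> x \<notin> S}" using zero by (cases x) auto
    then have "\<exists>k<3. x \<in> Bk \<alpha> n k" unfolding gaps by force
    then obtain k where "k < 3" "x \<in> Bk \<alpha> n k" by blast
    then have "x + 3 \<le> 2*n + 6*\<alpha>" by (rule B_le)
    then show False using that unfolding F0_def by linarith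
  qed
  have notin: "F0 \<notin> S"
  proof -
    define c where "c = (n*2) div 3"
    define r where "r = (n*2) mod 3"
    have nk: "n*2 = 3*c + r" unfolding c_def r_def by simp
    have r3: "r < 3" unfolding r_def by simp
    have "F0 \<in> Bk \<alpha> n 2"
    proof (cases "\<alpha> = 0")
      case True
      have "c \<ge> 1" using nk r3 assms(2) by linarith
      then have "F0 = 3*(c-1) + r" unfolding F0_def using nk True by simp
      moreover have "c - 1 \<in> {..<c}" using \<open>c \<ge> 1\<close> by simp
      ultimately show ?thesis unfolding Bk_def c_def[symmetric] r_def[symmetric] by blast
    next
      case False
      then have "F0 = 3*(c + 2*(\<alpha>-1)+1) + r" unfolding F0_def using nk by simp
      moreover have "c + 2*(\<alpha>-1)+1 \<in> (\<lambda>j. c + 2*j+1) ` {..<\<alpha>}" using False by auto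
      ultimately show ?thesis unfolding Bk_def c_def[symmetric] r_def[symmetric] by blast
    qed
    then show ?thesis using B_iff[OF assms(1,2), of 2] unfolding S_def by simp
  qed
  have fr: "frobenius S = int F0"
    unfolding frobenius_def
  proof (rule Greatest_equality)
    show "int F0 \<notin> int ` S" using notin by auto
  next
    fix y :: int assume y: "y \<notin> int ` S"
    show "y \<le> int F0"
    proof (cases "y < 0")
      case True then show ?thesis by simp
    next
      case False
      then obtain m where m: "y = int m" by (metis nonneg_int_cases not_less)
      then have "m \<notin> S" using y by auto
      then have "m \<le> F0" using above by (meson not_less)
      then show ?thesis using m by simp
    qed
  qed
  have "real F0 = 2 * real n + 6 * real \<alpha> - 3" unfolding F0_def using assms(2) by (simp add: of_nat_diff)
  moreover have "real (genus S) = 3 * real \<alpha> + real n - 1" unfolding g using assms(2) by (simp add: of_nat_diff)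
  ultimately show ?thesis unfolding fr \<beta>2_def \<beta>3_def by (simp add: field_simps)
qed

end
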